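(* Let $\mathcal{M}\in\mathbb{R}^{n\times n}$ be a Hurwitz matrix and let $\mu>0$. Let $P$ be the unique symmetric positive definite solution of $P\mathcal{M}+\mathcal{M}^TP=-2\mu I_n$. Then $$\bar{\sigma}(P)\,\bar{\sigma}(\mathcal{M})\le-\mu \quad\text{and}\quad \bar{\sigma}(P)\,\bar{\sigma}(\mathcal{M}+\mathcal{M}^* )\ge -2\mu.$$ In particular, if $\mathcal{M}$ is Hermitian (i.e. symmetric), then $\bar{\sigma}(P)\,\bar{\sigma}(\mathcal{M})=-\mu$.
   Context: $\bar{\sigma}(X)$ denotes the maximum real part of the eigenvalues of a square matrix $X$ (for a Hermitian matrix, its largest eigenvalue). $\mathcal{M}^*$ is the conjugate transpose of $\mathcal{M}$ (here equal to $\mathcal{M}^T$). A matrix is Hurwitz if all its eigenvalues have negative real part. *)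

theory Defs
  imports "Jordan_Normal_Form.Spectral_Radius"
begin

definition cspec :: "real mat \<Rightarrow> complex set" where
  "cspec A = spectrum (map_mat complex_of_real A)"

definition sigma_bar :: "real mat \<Rightarrow> real" where
  "sigma_bar A = Max (Re ` cspec A)"

definition hurwitz :: "real mat \<Rightarrow> bool" where
  "hurwitz A \<longleftrightarrow> (\<forall>l \<in> cspec A. Re l < 0)"

definition sym_pos_def :: "nat \<Rightarrow> real mat \<Rightarrow> bool" where
  "sym_pos_def n P \<longleftrightarrow> P \<in> carrier_mat n n \<and> transpose_mat P = P \<and>
     (\<forall>x \<in> carrier_vec n. x \<noteq> 0\<^sub>v n \<longrightarrow> x \<bullet> (P *\<^sub>v x) > 0)"

end

theory Submission imports Defs "HOL-Analysis.Function_Topology" begin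

lemma compact_sphere_fun:
  fixes n :: nat
  shows "compact {f :: nat \<Rightarrow> real. (\<forall>i. n \<le> i \<longrightarrow> f i = 0) \<and> (\<Sum>i<n. (f i)^2) = 1}"
proof -
  define K where "K = PiE UNIV (\<lambda>i::nat. if i < n then {-1..1::real} else {0})"
  have "compactin (product_topology (\<lambda>_. euclideanreal) UNIV) K"
    unfolding K_def by (subst compactin_PiE) auto
  hence cK: "compact K" using euclidean_product_topology by (metis compactin_euclidean_iff)
  have cl: "closed {f :: nat \<Rightarrow> real. (\<forall>i. n \<le> i \<longrightarrow> f i = 0) \<and> (\<Sum>i<n. (f i)^2) = 1}"
  proof -
    have c1: "closed {f :: nat \<Rightarrow> real. \<forall>i. n \<le> i \<longrightarrow> f i = 0}"
      by (intro closed_Collect_all closed_Collect_imp closed_Collect_eq continuous_intros) auto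
    have c2: "closed {f :: nat \<Rightarrow> real. (\<Sum>i<n. (f i)^2) = 1}"
      by (intro closed_Collect_eq continuous_intros) auto
    have "{f :: nat \<Rightarrow> real. (\<forall>i. n \<le> i \<longrightarrow> f i = 0) \<and> (\<Sum>i<n. (f i)^2) = 1}
       = {f. \<forall>i. n \<le> i \<longrightarrow> f i = 0} \<inter> {f. (\<Sum>i<n. (f i)^2) = 1}" by auto
    thus ?thesis using c1 c2 by auto
  qed
  have sub: "{f :: nat \<Rightarrow> real. (\<forall>i. n \<le> i \<longrightarrow> f i = 0) \<and> (\<Sum>i<n. (f i)^2) = 1} \<subseteq> K"
  proof
    fix f :: "nat \<Rightarrow> real" assume f: "f \<in> {f. (\<forall>i. n \<le> i \<longrightarrow> f i = 0) \<and> (\<Sum>i<n. (f i)^2) = 1}"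
    have "\<bar>f i\<bar> \<le> 1" if "i < n" for i
    proof -
      have "(f i)^2 \<le> (\<Sum>j<n. (f j)^2)"
        using that by (intro member_le_sum) auto
      hence "(f i)^2 \<le> 1^2" using f by simp
      thus ?thesis using abs_le_square_iff[of "f i" 1] by simp
    qed
    thus "f \<in> K" using f unfolding K_def by (auto simp: PiE_def extensional_def abs_le_iff)
  qed
  have "K \<inter> {f :: nat \<Rightarrow> real. (\<forall>i. n \<le> i \<longrightarrow> f i = 0) \<and> (\<Sum>i<n. (f i)^2) = 1} = {f :: nat \<Rightarrow> real. (\<forall>i. n \<le> i \<longrightarrow> f i = 0) \<and> (\<Sum>i<n. (f i)^2) = 1}" using sub by blast
  with compact_Int_closed[OF cK cl] show ?thesis by simp
qed

lemma sp_transpose: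
  fixes A :: "'a::comm_ring_1 mat"
  assumes "A \<in> carrier_mat n n" "x \<in> carrier_vec n" "y \<in> carrier_vec n"
  shows "x \<bullet> (A *\<^sub>v y) = (transpose_mat A *\<^sub>v x) \<bullet> y"
proof -
  have "x \<bullet> (A *\<^sub>v y) = (\<Sum>i<n. x $ i * (\<Sum>j<n. A $$ (i,j) * y $ j))"
    using assms by (simp add: scalar_prod_def mult_mat_vec_def row_def lessThan_atLeast0)
  also have "\<dots> = (\<Sum>i<n. \<Sum>j<n. x $ i * A $$ (i,j) * y $ j)"
    by (simp add: sum_distrib_left mult.assoc)
  also have "\<dots> = (\<Sum>j<n. \<Sum>i<n. x $ i * A $$ (i,j) * y $ j)"
    by (rule sum.swap)
  also have "\<dots> = (\<Sum>j<n. (\<Sum>i<n. x $ i * A $$ (i,j)) * y $ j)"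
    by (simp add: sum_distrib_right)
  also have "\<dots> = (transpose_mat A *\<^sub>v x) \<bullet> y"
    using assms by (simp add: scalar_prod_def mult_mat_vec_def row_def col_def lessThan_atLeast0 mult.commute)
  finally show ?thesis .
qed

lemma quad_form_sum:
  fixes A :: "real mat"
  assumes "A \<in> carrier_mat n n"
  shows "Matrix.vec n f \<bullet> (A *\<^sub>v Matrix.vec n f) = (\<Sum>i<n. f i * (\<Sum>j<n. A $$ (i,j) * f j))"
  using assms by (simp add: scalar_prod_def mult_mat_vec_def row_def lessThan_atLeast0)

lemma max_quad:
  fixes A :: "real mat"
  assumes A: "A \<in> carrier_mat n n" and n: "n > 0"
  shows "\<exists>x0 \<in> carrier_vec n. x0 \<bullet> x0 = 1 \<and>
     (\<forall>x\<in>carrier_vec n. x \<bullet> x = 1 \<longrightarrow> x \<bullet> (A *\<^sub>v x) \<le> x0 \<bullet> (A *\<^sub>v x0))"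
proof -
  define S where "S = {f :: nat \<Rightarrow> real. (\<forall>i. n \<le> i \<longrightarrow> f i = 0) \<and> (\<Sum>i<n. (f i)^2) = 1}"
  define g where "g = (\<lambda>f::nat\<Rightarrow>real. \<Sum>i<n. f i * (\<Sum>j<n. A $$ (i,j) * f j))"
  have cS: "compact S" unfolding S_def by (rule compact_sphere_fun)
  have e0: "(\<lambda>i::nat. if i = 0 then 1 else 0::real) \<in> S"
  proof -
    have "(\<Sum>i<n. ((if i = 0 then 1 else 0::real))^2) = (\<Sum>i<n. if i = 0 then 1 else 0)"
      by (intro sum.cong) auto
    thus ?thesis using n unfolding S_def by auto
  qed
  hence ne: "S \<noteq> {}" by auto
  have cg: "continuous_on S g" unfolding g_def
  proof -
    have cc: "\<And>i. continuous_on S (\<lambda>x::nat\<Rightarrow>real. x i)"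
      by (rule continuous_on_subset[OF continuous_on_product_coordinates]) auto
    show "continuous_on S (\<lambda>f. \<Sum>i<n. f i * (\<Sum>j<n. A $$ (i, j) * f j))"
      by (intro continuous_intros cc)
  qed
  obtain f0 where f0: "f0 \<in> S" and mx: "\<And>f. f \<in> S \<Longrightarrow> g f \<le> g f0"
    using continuous_attains_sup[OF cS ne cg] by blast
  have nrm: "Matrix.vec n f \<bullet> Matrix.vec n f = (\<Sum>i<n. (f i)^2)" for f :: "nat \<Rightarrow> real"
    by (simp add: scalar_prod_def lessThan_atLeast0 power2_eq_square)
  show ?thesis
  proof (intro bexI[of _ "Matrix.vec n f0"] conjI ballI impI)
    show "Matrix.vec n f0 \<bullet> Matrix.vec n f0 = 1" using f0 nrm unfolding S_def by auto
    fix x :: "real vec" assume x: "x \<in> carrier_vec n" and x1: "x \<bullet> x = 1"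
    define f where "f = (\<lambda>i. if i < n then x $ i else 0)"
    have vx: "Matrix.vec n f = x" using x unfolding f_def by auto
    have "f \<in> S" unfolding S_def using nrm[of f] x1 vx by (auto simp: f_def)
    hence "g f \<le> g f0" by (rule mx)
    thus "x \<bullet> (A *\<^sub>v x) \<le> Matrix.vec n f0 \<bullet> (A *\<^sub>v Matrix.vec n f0)"
      using quad_form_sum[OF A] vx unfolding g_def by metis
  qed auto
qed

lemma sym_sp:
  fixes A :: "real mat"
  assumes A: "A \<in> carrier_mat n n" and s: "transpose_mat A = A"
    and x: "x \<in> carrier_vec n" and y: "y \<in> carrier_vec n"
  shows "x \<bullet> (A *\<^sub>v y) = y \<bullet> (A *\<^sub>v x)"
  using sp_transpose[OF A x y] s comm_scalar_prod[of "A *\<^sub>v x" n y] A x y by simp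

lemma sp_self_ge0: "(x :: real vec) \<bullet> x \<ge> 0"
  by (simp add: scalar_prod_def sum_nonneg)

lemma sp_self_eq0:
  assumes x: "(x :: real vec) \<in> carrier_vec n" and e: "x \<bullet> x = 0"
  shows "x = 0\<^sub>v n"
proof (rule eq_vecI)
  have "\<forall>i\<in>{0..<dim_vec x}. x $ i * x $ i = 0"
    using e unfolding scalar_prod_def by (subst sum_nonneg_eq_0_iff[symmetric]) auto
  thus "\<And>i. i < dim_vec (0\<^sub>v n) \<Longrightarrow> x $ i = 0\<^sub>v n $ i" using x by auto
qed (use x in auto)

lemma quad_expand:
  fixes A :: "real mat"
  assumes A: "A \<in> carrier_mat n n" and s: "transpose_mat A = A"
    and x: "x \<in> carrier_vec n" and w: "w \<in> carrier_vec n"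
  shows "(x + t \<cdot>\<^sub>v w) \<bullet> (A *\<^sub>v (x + t \<cdot>\<^sub>v w))
     = x \<bullet> (A *\<^sub>v x) + 2 * t * (w \<bullet> (A *\<^sub>v x)) + t^2 * (w \<bullet> (A *\<^sub>v w))"
proof -
  have Ax: "A *\<^sub>v x \<in> carrier_vec n" and Aw: "A *\<^sub>v w \<in> carrier_vec n" using A x w by auto
  have "A *\<^sub>v (x + t \<cdot>\<^sub>v w) = A *\<^sub>v x + t \<cdot>\<^sub>v (A *\<^sub>v w)"
    using A x w by (simp add: mult_add_distrib_mat_vec mult_mat_vec)
  hence "(x + t \<cdot>\<^sub>v w) \<bullet> (A *\<^sub>v (x + t \<cdot>\<^sub>v w))
      = x \<bullet> (A *\<^sub>v x) + t * (x \<bullet> (A *\<^sub>v w)) + t * (w \<bullet> (A *\<^sub>v x)) + t * t * (w \<bullet> (A *\<^sub>v w))"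
    using x w Ax Aw
    by (simp add: add_scalar_prod_distrib[of _ n] scalar_prod_add_distrib[of _ n] algebra_simps)
  thus ?thesis using sym_sp[OF A s x w] by (simp add: power2_eq_square algebra_simps)
qed

lemma norm_expand:
  fixes x w :: "real vec"
  assumes x: "x \<in> carrier_vec n" and w: "w \<in> carrier_vec n"
  shows "(x + t \<cdot>\<^sub>v w) \<bullet> (x + t \<cdot>\<^sub>v w) = x \<bullet> x + 2 * t * (w \<bullet> x) + t^2 * (w \<bullet> w)"
proof -
  have "(x + t \<cdot>\<^sub>v w) \<bullet> (x + t \<cdot>\<^sub>v w) = x \<bullet> x + t * (x \<bullet> w) + t * (w \<bullet> x) + t * t * (w \<bullet> w)"
    using x w by (simp add: add_scalar_prod_distrib[of _ n] scalar_prod_add_distrib[of _ n] algebra_simps)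
  thus ?thesis using comm_scalar_prod[OF x w] by (simp add: power2_eq_square algebra_simps)
qed

lemma rayleigh:
  fixes A :: "real mat"
  assumes A: "A \<in> carrier_mat n n" and s: "transpose_mat A = A" and n: "n > 0"
  shows "\<exists>x0 \<in> carrier_vec n. x0 \<bullet> x0 = 1 \<and> A *\<^sub>v x0 = (x0 \<bullet> (A *\<^sub>v x0)) \<cdot>\<^sub>v x0 \<and>
     (\<forall>x\<in>carrier_vec n. x \<bullet> (A *\<^sub>v x) \<le> (x0 \<bullet> (A *\<^sub>v x0)) * (x \<bullet> x))"
proof -
  obtain x0 where x0: "x0 \<in> carrier_vec n" and x01: "x0 \<bullet> x0 = 1"
    and mx: "\<And>x. x \<in> carrier_vec n \<Longrightarrow> x \<bullet> x = 1 \<Longrightarrow> x \<bullet> (A *\<^sub>v x) \<le> x0 \<bullet> (A *\<^sub>v x0)"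
    using max_quad[OF A n] by blast
  define c where "c = x0 \<bullet> (A *\<^sub>v x0)"
  have bound: "x \<bullet> (A *\<^sub>v x) \<le> c * (x \<bullet> x)" if x: "x \<in> carrier_vec n" for x
  proof (cases "x \<bullet> x = 0")
    case True
    hence "x = 0\<^sub>v n" using sp_self_eq0[OF x] by auto
    thus ?thesis using A by simp
  next
    case False
    hence pos: "x \<bullet> x > 0" using sp_self_ge0[of x] by linarith
    define r where "r = 1 / sqrt (x \<bullet> x)"
    have r2: "r * r = 1 / (x \<bullet> x)" unfolding r_def using pos
      by (simp add: real_sqrt_mult[symmetric])
    define y where "y = r \<cdot>\<^sub>v x"
    have y: "y \<in> carrier_vec n" using x unfolding y_def by simp
    have "y \<bullet> y = r * r * (x \<bullet> x)" unfolding y_def using x by simp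
    hence y1: "y \<bullet> y = 1" using r2 pos by simp
    have "y \<bullet> (A *\<^sub>v y) = r * r * (x \<bullet> (A *\<^sub>v x))" unfolding y_def using x A
      by (simp add: mult_mat_vec)
    hence "(x \<bullet> (A *\<^sub>v x)) / (x \<bullet> x) \<le> c" using mx[OF y y1] r2 unfolding c_def by simp
    thus ?thesis using pos by (simp add: divide_le_eq)
  qed
  define r where "r = A *\<^sub>v x0 - c \<cdot>\<^sub>v x0"
  have r: "r \<in> carrier_vec n" unfolding r_def using A x0 by simp
  have rAx: "r \<bullet> (A *\<^sub>v x0) - c * (r \<bullet> x0) = r \<bullet> r"
    unfolding r_def using A x0
    by (simp add: minus_scalar_prod_distrib[of _ n] scalar_prod_minus_distrib[of _ n])
  define R where "R = r \<bullet> r"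
  define K where "K = r \<bullet> (A *\<^sub>v r) - c * (r \<bullet> r)"
  have ineq: "2 * t * R + t^2 * K \<le> 0" for t
  proof -
    have xt: "x0 + t \<cdot>\<^sub>v r \<in> carrier_vec n" using x0 r by simp
    have "x0 \<bullet> (A *\<^sub>v x0) + 2 * t * (r \<bullet> (A *\<^sub>v x0)) + t^2 * (r \<bullet> (A *\<^sub>v r))
       \<le> c * (x0 \<bullet> x0 + 2 * t * (r \<bullet> x0) + t^2 * (r \<bullet> r))"
      using bound[OF xt] quad_expand[OF A s x0 r, of t] norm_expand[OF x0 r, of t] by simp
    thus ?thesis using rAx x01 unfolding R_def K_def c_def[symmetric]
      by (simp add: algebra_simps)
  qed
  have R0: "R = 0"
  proof (rule ccontr)
    assume "R \<noteq> 0"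
    hence Rp: "R > 0" unfolding R_def using sp_self_ge0[of r] by linarith
    define t where "t = R / (\<bar>K\<bar> + 1)"
    have tp: "t > 0" unfolding t_def using Rp by simp
    have "t * (2 * R + t * K) \<le> 0" using ineq[of t] by (simp add: power2_eq_square algebra_simps)
    hence "2 * R + t * K \<le> 0" using tp by (simp add: mult_le_0_iff)
    moreover have "t * \<bar>K\<bar> < R" unfolding t_def using Rp
      by (simp add: field_simps)
    moreover have "- (t * K) \<le> t * \<bar>K\<bar>" using tp by (simp add: abs_if)
    ultimately show False using Rp by linarith
  qed
  hence r0: "r = 0\<^sub>v n" using sp_self_eq0[OF r] unfolding R_def by simp
  have "A *\<^sub>v x0 = c \<cdot>\<^sub>v x0"
  proof (rule eq_vecI)
    fix i assume "i < dim_vec (c \<cdot>\<^sub>v x0)"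
    hence i: "i < n" using x0 by simp
    have "r $ i = 0" using r0 i by simp
    thus "(A *\<^sub>v x0) $ i = (c \<cdot>\<^sub>v x0) $ i" unfolding r_def using i A x0 by simp
  qed (use A x0 in simp)
  thus ?thesis using x0 x01 bound unfolding c_def by blast
qed

lemma re_im_eig:
  fixes A :: "real mat"
  assumes A: "A \<in> carrier_mat n n" and l: "l \<in> cspec A"
  shows "\<exists>a b. a \<in> carrier_vec n \<and> b \<in> carrier_vec n \<and> a \<bullet> a + b \<bullet> b > 0 \<and>
     A *\<^sub>v a = Re l \<cdot>\<^sub>v a - Im l \<cdot>\<^sub>v b \<and> A *\<^sub>v b = Im l \<cdot>\<^sub>v a + Re l \<cdot>\<^sub>v b"
proof -
  obtain v where v: "v \<in> carrier_vec n" and v0: "v \<noteq> 0\<^sub>v n"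
    and ev: "map_mat complex_of_real A *\<^sub>v v = l \<cdot>\<^sub>v v"
    using l A unfolding cspec_def spectrum_def eigenvalue_def eigenvector_def by auto
  define a where "a = map_vec Re v"
  define b where "b = map_vec Im v"
  have a: "a \<in> carrier_vec n" and b: "b \<in> carrier_vec n" using v unfolding a_def b_def by auto
  have e: "(\<Sum>j=0..<n. complex_of_real (A $$ (i,j)) * v $ j) = l * v $ i" if i: "i < n" for i
  proof -
    have "(map_mat complex_of_real A *\<^sub>v v) $ i = (l \<cdot>\<^sub>v v) $ i" using ev by simp
    thus ?thesis using i A v by (simp add: scalar_prod_def row_def)
  qed
  have ea: "A *\<^sub>v a = Re l \<cdot>\<^sub>v a - Im l \<cdot>\<^sub>v b"
  proof (rule eq_vecI)
    fix i assume "i < dim_vec (Re l \<cdot>\<^sub>v a - Im l \<cdot>\<^sub>v b)"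
    hence i: "i < n" using b by simp
    have "Re (\<Sum>j=0..<n. complex_of_real (A $$ (i,j)) * v $ j) = Re (l * v $ i)" using e[OF i] by simp
    thus "(A *\<^sub>v a) $ i = (Re l \<cdot>\<^sub>v a - Im l \<cdot>\<^sub>v b) $ i"
      using i A a b v by (simp add: a_def b_def scalar_prod_def row_def Re_sum)
  qed (use A a b in simp)
  have eb: "A *\<^sub>v b = Im l \<cdot>\<^sub>v a + Re l \<cdot>\<^sub>v b"
  proof (rule eq_vecI)
    fix i assume "i < dim_vec (Im l \<cdot>\<^sub>v a + Re l \<cdot>\<^sub>v b)"
    hence i: "i < n" using b by simp
    have "Im (\<Sum>j=0..<n. complex_of_real (A $$ (i,j)) * v $ j) = Im (l * v $ i)" using e[OF i] by simp
    thus "(A *\<^sub>v b) $ i = (Im l \<cdot>\<^sub>v a + Re l \<cdot>\<^sub>v b) $ i"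
      using i A a b v by (simp add: a_def b_def scalar_prod_def row_def Im_sum)
  qed (use A a b in simp)
  have pos: "a \<bullet> a + b \<bullet> b > 0"
  proof (rule ccontr)
    assume "\<not> ?thesis"
    hence "a \<bullet> a = 0" "b \<bullet> b = 0" using sp_self_ge0[of a] sp_self_ge0[of b] by linarith+
    hence a0: "a = 0\<^sub>v n" and b0: "b = 0\<^sub>v n" using sp_self_eq0 a b by auto
    have "v = 0\<^sub>v n"
    proof (rule eq_vecI)
      fix i assume "i < dim_vec (0\<^sub>v n :: complex vec)"
      hence i: "i < n" by simp
      have "Re (v $ i) = 0" "Im (v $ i) = 0"
        using arg_cong[OF a0, of "\<lambda>w. w $ i"] arg_cong[OF b0, of "\<lambda>w. w $ i"] i v
        by (auto simp: a_def b_def)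
      thus "v $ i = 0\<^sub>v n $ i" using i by (simp add: complex_eq_iff)
    qed (use v in simp)
    thus False using v0 by simp
  qed
  show ?thesis using a b pos ea eb by blast
qed

lemma sigma_bar_sym:
  fixes A :: "real mat"
  assumes A: "A \<in> carrier_mat n n" and s: "transpose_mat A = A" and n: "n > 0"
  shows "\<exists>x0 \<in> carrier_vec n. x0 \<bullet> x0 = 1 \<and> A *\<^sub>v x0 = sigma_bar A \<cdot>\<^sub>v x0 \<and>
     (\<forall>x\<in>carrier_vec n. x \<bullet> (A *\<^sub>v x) \<le> sigma_bar A * (x \<bullet> x))"
proof -
  obtain x0 where x0: "x0 \<in> carrier_vec n" and x01: "x0 \<bullet> x0 = 1"
    and ev: "A *\<^sub>v x0 = (x0 \<bullet> (A *\<^sub>v x0)) \<cdot>\<^sub>v x0"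
    and bd: "\<forall>x\<in>carrier_vec n. x \<bullet> (A *\<^sub>v x) \<le> (x0 \<bullet> (A *\<^sub>v x0)) * (x \<bullet> x)"
    using rayleigh[OF A s n] by blast
  define c where "c = x0 \<bullet> (A *\<^sub>v x0)"
  have Ac: "map_mat complex_of_real A \<in> carrier_mat n n" using A by simp
  have fin: "finite (Re ` cspec A)" unfolding cspec_def using card_finite_spectrum(1)[OF Ac] by simp
  have mem: "complex_of_real c \<in> cspec A"
  proof -
    define v where "v = map_vec complex_of_real x0"
    have v: "v \<in> carrier_vec n" using x0 unfolding v_def by simp
    have "v \<noteq> 0\<^sub>v n"
    proof
      assume "v = 0\<^sub>v n"
      hence "x0 = 0\<^sub>v n" unfolding v_def using x0
        by (intro eq_vecI) (auto dest!: arg_cong[of _ _ "\<lambda>w. w $ _"])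
      thus False using x01 by simp
    qed
    moreover have "map_mat complex_of_real A *\<^sub>v v = complex_of_real c \<cdot>\<^sub>v v"
    proof (rule eq_vecI)
      fix i assume "i < dim_vec (complex_of_real c \<cdot>\<^sub>v v)"
      hence i: "i < n" using v by simp
      have "(A *\<^sub>v x0) $ i = c * x0 $ i" using arg_cong[OF ev, of "\<lambda>w. w $ i"] i x0 unfolding c_def by simp
      hence "(\<Sum>j=0..<n. A $$ (i,j) * x0 $ j) = c * x0 $ i" using i A x0 by (simp add: scalar_prod_def row_def)
      hence "complex_of_real (\<Sum>j=0..<n. A $$ (i,j) * x0 $ j) = complex_of_real (c * x0 $ i)" by simp
      thus "(map_mat complex_of_real A *\<^sub>v v) $ i = (complex_of_real c \<cdot>\<^sub>v v) $ i"
        using i A x0 by (simp add: v_def scalar_prod_def row_def)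
    qed (use A v in simp)
    ultimately show ?thesis using v A unfolding cspec_def spectrum_def eigenvalue_def eigenvector_def by auto
  qed
  have le: "y \<le> c" if yA: "y \<in> Re ` cspec A" for y
  proof -
    obtain l where l: "l \<in> cspec A" and y: "y = Re l" using yA by blast
    obtain a b where a: "a \<in> carrier_vec n" and b: "b \<in> carrier_vec n" and pos: "a \<bullet> a + b \<bullet> b > 0"
      and ea: "A *\<^sub>v a = Re l \<cdot>\<^sub>v a - Im l \<cdot>\<^sub>v b" and eb: "A *\<^sub>v b = Im l \<cdot>\<^sub>v a + Re l \<cdot>\<^sub>v b"
      using re_im_eig[OF A l] by blast
    have "a \<bullet> (A *\<^sub>v a) = Re l * (a \<bullet> a) - Im l * (a \<bullet> b)"
      unfolding ea using a b by (simp add: scalar_prod_minus_distrib[of _ n])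
    moreover have "b \<bullet> (A *\<^sub>v b) = Im l * (b \<bullet> a) + Re l * (b \<bullet> b)"
      unfolding eb using a b by (simp add: scalar_prod_add_distrib[of _ n])
    moreover have "a \<bullet> b = b \<bullet> a" using comm_scalar_prod[OF a b] .
    ultimately have "a \<bullet> (A *\<^sub>v a) + b \<bullet> (A *\<^sub>v b) = Re l * (a \<bullet> a + b \<bullet> b)"
      by (simp add: algebra_simps)
    moreover have "a \<bullet> (A *\<^sub>v a) + b \<bullet> (A *\<^sub>v b) \<le> c * (a \<bullet> a + b \<bullet> b)"
      using bd a b unfolding c_def by (simp add: distrib_left add_mono)
    ultimately have "Re l * (a \<bullet> a + b \<bullet> b) \<le> c * (a \<bullet> a + b \<bullet> b)" by simp
    thus ?thesis using pos y by simp
  qed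
  have cm: "c \<in> Re ` cspec A"
    by (rule image_eqI[of _ _ "complex_of_real c"]) (simp_all add: mem)
  have "sigma_bar A = c" unfolding sigma_bar_def
    by (rule Max_eqI[OF fin le cm])
  thus ?thesis using x0 x01 ev bd unfolding c_def by auto
qed

theorem lemma5:
  fixes M P :: "real mat" and n :: nat and \<mu> :: real
  assumes "n > 0"
    and "M \<in> carrier_mat n n"
    and "hurwitz M"
    and "\<mu> > 0"
    and "sym_pos_def n P"
    and "P * M + transpose_mat M * P = (- 2 * \<mu>) \<cdot>\<^sub>m 1\<^sub>m n"
  shows "sigma_bar P * sigma_bar M \<le> - \<mu>
    \<and> sigma_bar P * sigma_bar (M + transpose_mat M) \<ge> - 2 * \<mu>
    \<and> (transpose_mat M = M \<longrightarrow> sigma_bar P * sigma_bar M = - \<mu>)"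
proof -
  note n = assms(1) and M = assms(2) and hw = assms(3) and mu = assms(4) and E = assms(6)
  have P: "P \<in> carrier_mat n n" and Ps: "transpose_mat P = P"
    and Ppd: "\<And>x. x \<in> carrier_vec n \<Longrightarrow> x \<noteq> 0\<^sub>v n \<Longrightarrow> x \<bullet> (P *\<^sub>v x) > 0"
    using assms(5) unfolding sym_pos_def_def by auto
  have MT: "transpose_mat M \<in> carrier_mat n n" using M by simp
  have key: "(P *\<^sub>v x) \<bullet> (M *\<^sub>v x) = - \<mu> * (x \<bullet> x)" if x: "x \<in> carrier_vec n" for x
  proof -
    have Mx: "M *\<^sub>v x \<in> carrier_vec n" and Px: "P *\<^sub>v x \<in> carrier_vec n" using M P x by auto
    have h1: "(P * M + transpose_mat M * P) *\<^sub>v x = P *\<^sub>v (M *\<^sub>v x) + transpose_mat M *\<^sub>v (P *\<^sub>v x)"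
      using P M x by (simp add: add_mult_distrib_mat_vec[of _ n n] assoc_mult_mat_vec[of _ n n _ n])
    moreover have h2: "((- 2 * \<mu>) \<cdot>\<^sub>m 1\<^sub>m n) *\<^sub>v x = (- 2 * \<mu>) \<cdot>\<^sub>v x"
    proof (rule eq_vecI)
      fix i assume "i < dim_vec ((- 2 * \<mu>) \<cdot>\<^sub>v x)"
      hence i: "i < n" using x by simp
      have "(((- 2 * \<mu>) \<cdot>\<^sub>m 1\<^sub>m n) *\<^sub>v x) $ i = (\<Sum>ia=0..<n. - (2 * \<mu> * (if i = ia then 1 else 0) * x $ ia))"
        using i x by (simp add: scalar_prod_def row_def)
      also have "\<dots> = (\<Sum>ia=0..<n. if ia = i then - (2 * \<mu> * x $ i) else 0)" by (rule sum.cong) auto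
      also have "\<dots> = - 2 * \<mu> * x $ i" using i by simp
      finally show "(((- 2 * \<mu>) \<cdot>\<^sub>m 1\<^sub>m n) *\<^sub>v x) $ i = ((- 2 * \<mu>) \<cdot>\<^sub>v x) $ i" using i x by simp
    qed (use x in simp)
    ultimately have "x \<bullet> (P *\<^sub>v (M *\<^sub>v x)) + x \<bullet> (transpose_mat M *\<^sub>v (P *\<^sub>v x)) = (- 2 * \<mu>) * (x \<bullet> x)"
    proof -
      have vv: "P *\<^sub>v (M *\<^sub>v x) + transpose_mat M *\<^sub>v (P *\<^sub>v x) = (- 2 * \<mu>) \<cdot>\<^sub>v x"
        using h1 h2 E by simp
      have "x \<bullet> (P *\<^sub>v (M *\<^sub>v x)) + x \<bullet> (transpose_mat M *\<^sub>v (P *\<^sub>v x))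
          = x \<bullet> (P *\<^sub>v (M *\<^sub>v x) + transpose_mat M *\<^sub>v (P *\<^sub>v x))"
        using x Mx Px MT P by (intro scalar_prod_add_distrib[of _ n, symmetric]) auto
      also have "\<dots> = x \<bullet> ((- 2 * \<mu>) \<cdot>\<^sub>v x)" using vv by simp
      also have "\<dots> = (- 2 * \<mu>) * (x \<bullet> x)" using x by simp
      finally show ?thesis .
    qed
    moreover have "x \<bullet> (P *\<^sub>v (M *\<^sub>v x)) = (P *\<^sub>v x) \<bullet> (M *\<^sub>v x)"
      using sp_transpose[OF P x Mx] Ps by simp
    moreover have "x \<bullet> (transpose_mat M *\<^sub>v (P *\<^sub>v x)) = (P *\<^sub>v x) \<bullet> (M *\<^sub>v x)"
      using sp_transpose[OF MT x Px] comm_scalar_prod[OF Mx Px] by simp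
    ultimately show ?thesis by simp
  qed
  obtain x0 where x0: "x0 \<in> carrier_vec n" and x01: "x0 \<bullet> x0 = 1"
    and Px0: "P *\<^sub>v x0 = sigma_bar P \<cdot>\<^sub>v x0"
    and Pbd: "\<And>x. x \<in> carrier_vec n \<Longrightarrow> x \<bullet> (P *\<^sub>v x) \<le> sigma_bar P * (x \<bullet> x)"
    using sigma_bar_sym[OF P Ps n] by blast
  define s where "s = sigma_bar P"
  have x0nz: "x0 \<noteq> 0\<^sub>v n" using x01 by auto
  have "x0 \<bullet> (P *\<^sub>v x0) = s" using Px0 x0 x01 unfolding s_def by simp
  hence spos: "s > 0" using Ppd[OF x0 x0nz] by simp
  have Mx0: "M *\<^sub>v x0 \<in> carrier_vec n" using M x0 by simp
  have kx0: "s * (x0 \<bullet> (M *\<^sub>v x0)) = - \<mu>"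
    using key[OF x0] Px0 x0 x01 Mx0 unfolding s_def by simp
  have c1: "s * sigma_bar M \<le> - \<mu>"
  proof -
    have Mc: "map_mat complex_of_real M \<in> carrier_mat n n" using M by simp
    have fin: "finite (Re ` cspec M)" unfolding cspec_def using card_finite_spectrum(1)[OF Mc] by simp
    have ne: "Re ` cspec M \<noteq> {}" unfolding cspec_def using spectrum_non_empty[OF Mc n] by simp
    obtain l where l: "l \<in> cspec M" and ls: "sigma_bar M = Re l"
      using Max_in[OF fin ne] unfolding sigma_bar_def by auto
    have neg: "Re l < 0" using hw l unfolding hurwitz_def by auto
    obtain a b where a: "a \<in> carrier_vec n" and b: "b \<in> carrier_vec n" and pos: "a \<bullet> a + b \<bullet> b > 0"
      and ea: "M *\<^sub>v a = Re l \<cdot>\<^sub>v a - Im l \<cdot>\<^sub>v b" and eb: "M *\<^sub>v b = Im l \<cdot>\<^sub>v a + Re l \<cdot>\<^sub>v b"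
      using re_im_eig[OF M l] by blast
    have Pa: "P *\<^sub>v a \<in> carrier_vec n" and Pb: "P *\<^sub>v b \<in> carrier_vec n" using P a b by auto
    have "(P *\<^sub>v a) \<bullet> (M *\<^sub>v a) = Re l * ((P *\<^sub>v a) \<bullet> a) - Im l * ((P *\<^sub>v a) \<bullet> b)"
      unfolding ea using a b Pa by (simp add: scalar_prod_minus_distrib[of _ n])
    moreover have "(P *\<^sub>v b) \<bullet> (M *\<^sub>v b) = Im l * ((P *\<^sub>v b) \<bullet> a) + Re l * ((P *\<^sub>v b) \<bullet> b)"
      unfolding eb using a b Pb by (simp add: scalar_prod_add_distrib[of _ n])
    moreover have "(P *\<^sub>v b) \<bullet> a = (P *\<^sub>v a) \<bullet> b"
      using sym_sp[OF P Ps a b] comm_scalar_prod[OF a Pb] comm_scalar_prod[OF b Pa] by simp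
    moreover have "(P *\<^sub>v a) \<bullet> a = a \<bullet> (P *\<^sub>v a)" using comm_scalar_prod[OF Pa a] .
    moreover have "(P *\<^sub>v b) \<bullet> b = b \<bullet> (P *\<^sub>v b)" using comm_scalar_prod[OF Pb b] .
    ultimately have "(P *\<^sub>v a) \<bullet> (M *\<^sub>v a) + (P *\<^sub>v b) \<bullet> (M *\<^sub>v b)
        = Re l * (a \<bullet> (P *\<^sub>v a) + b \<bullet> (P *\<^sub>v b))" by (simp add: algebra_simps)
    hence eq: "Re l * (a \<bullet> (P *\<^sub>v a) + b \<bullet> (P *\<^sub>v b)) = - \<mu> * (a \<bullet> a + b \<bullet> b)"
      using key[OF a] key[OF b] by (simp add: algebra_simps)
    have "a \<bullet> (P *\<^sub>v a) + b \<bullet> (P *\<^sub>v b) \<le> s * (a \<bullet> a + b \<bullet> b)"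
      using Pbd[OF a] Pbd[OF b] unfolding s_def by (simp add: distrib_left)
    hence "Re l * (s * (a \<bullet> a + b \<bullet> b)) \<le> Re l * (a \<bullet> (P *\<^sub>v a) + b \<bullet> (P *\<^sub>v b))"
      using neg by (intro mult_left_mono_neg) auto
    hence "(Re l * s) * (a \<bullet> a + b \<bullet> b) \<le> (- \<mu>) * (a \<bullet> a + b \<bullet> b)" using eq by (simp add: mult.assoc)
    hence "Re l * s \<le> - \<mu>" using pos mult_le_cancel_right_pos[of "a \<bullet> a + b \<bullet> b" "Re l * s" "- \<mu>"] by linarith
    thus ?thesis using ls by (simp add: mult.commute)
  qed
  have c2: "s * sigma_bar (M + transpose_mat M) \<ge> - 2 * \<mu>"
  proof -
    have B: "M + transpose_mat M \<in> carrier_mat n n" using M by simp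
    have Bs: "transpose_mat (M + transpose_mat M) = M + transpose_mat M"
      using M by (simp add: transpose_add comm_add_mat[of _ n n])
    have Bbd: "\<forall>x\<in>carrier_vec n. x \<bullet> ((M + transpose_mat M) *\<^sub>v x) \<le> sigma_bar (M + transpose_mat M) * (x \<bullet> x)"
      using sigma_bar_sym[OF B Bs n] by auto
    have "x0 \<bullet> ((M + transpose_mat M) *\<^sub>v x0) = x0 \<bullet> (M *\<^sub>v x0) + x0 \<bullet> (transpose_mat M *\<^sub>v x0)"
      using M x0 MT by (simp add: add_mult_distrib_mat_vec[of _ n n] scalar_prod_add_distrib[of _ n])
    also have "x0 \<bullet> (transpose_mat M *\<^sub>v x0) = x0 \<bullet> (M *\<^sub>v x0)"
      using sp_transpose[OF MT x0 x0] comm_scalar_prod[OF Mx0 x0] by simp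
    finally have "x0 \<bullet> ((M + transpose_mat M) *\<^sub>v x0) = 2 * (x0 \<bullet> (M *\<^sub>v x0))" by simp
    hence "2 * (x0 \<bullet> (M *\<^sub>v x0)) \<le> sigma_bar (M + transpose_mat M)" using Bbd x0 x01 by force
    hence "s * (2 * (x0 \<bullet> (M *\<^sub>v x0))) \<le> s * sigma_bar (M + transpose_mat M)"
      using spos by (intro mult_left_mono) auto
    thus ?thesis using kx0 by (simp add: algebra_simps)
  qed
  have c3: "transpose_mat M = M \<longrightarrow> s * sigma_bar M = - \<mu>"
  proof
    assume Ms: "transpose_mat M = M"
    have Mbd: "\<forall>x\<in>carrier_vec n. x \<bullet> (M *\<^sub>v x) \<le> sigma_bar M * (x \<bullet> x)"
      using sigma_bar_sym[OF M Ms n] by auto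
    have "x0 \<bullet> (M *\<^sub>v x0) \<le> sigma_bar M" using Mbd x0 x01 by force
    hence "s * (x0 \<bullet> (M *\<^sub>v x0)) \<le> s * sigma_bar M" using spos by (intro mult_left_mono) auto
    thus "s * sigma_bar M = - \<mu>" using kx0 c1 by simp
  qed
  show ?thesis using c1 c2 c3 unfolding s_def by simp
qed

end
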